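(* Let $M$ be a graded finitely generated faithful graded multiplication $R$-module and $U$ a proper graded submodule of $M$, and assume $J_{gr}(M)=J_{gr}(R)M$. Then $U$ is a graded weakly $J_{gr}$-semiprime submodule of $M$ if and only if $(U:_RM)$ is a graded weakly $J_{gr}$-semiprime ideal of $R$.
   Context: Standing conventions: $\Gamma$ is a group, $R=\bigoplus_{g\in\Gamma}R_g$ is a commutative $\Gamma$-graded ring with identity, and $M=\bigoplus_{g\in\Gamma}M_g$ is a unitary $\Gamma$-graded $R$-module. $h(R)$, $h(M)$ are the homogeneous elements. A submodule $U$ is graded if $U=\bigoplus_g(U\cap M_g)$. $M$ is graded finitely generated if $M=Ra_1+\dots+Ra_n$ with $a_i\in h(M)$; graded multiplication if every graded submodule equals $KM$ for some graded ideal $K$ of $R$; faithful if $\mathrm{ann}_R(M)=0$. $(U:_RM)=\{r\in R: rM\subseteq U\}$. For a graded module $N$, a graded submodule $U\neq N$ is Gr-maximal if every graded submodule between $U$ and $N$ equals $U$ or $N$; $J_{gr}(N)$ is the intersection of all Gr-maximal submodules of $N$ ($=N$ if none); $J_{gr}(R)$ is this for $N=R$. A proper graded submodule $U$ of $M$ is graded weakly $J_{gr}$-semiprime if whenever $r_g\in h(R)$, $m_h\in h(M)$, $n\in\mathbb{Z}^+$ and $0\neq r_g^nm_h\in U$, then $r_gm_h\in U+J_{gr}(M)$; a graded ideal of $R$ is graded weakly $J_{gr}$-semiprime if it is so as a submodule of the graded $R$-module $R$. *)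

theory Defs
  imports Complex_Main
begin

text \<open>The group Gamma is a type of class group_add
  (written additively, not necessarily abelian). The ring R is the whole type 'r,
  the module M is the whole type 'm with scalar multiplication scale.\<close>

definition gr_decomp :: "('g \<Rightarrow> 'b::ab_group_add set) \<Rightarrow> bool" where
  "gr_decomp A \<longleftrightarrow>
     (\<forall>g. 0 \<in> A g \<and> (\<forall>x\<in>A g. \<forall>y\<in>A g. x - y \<in> A g)) \<and>
     (\<forall>x. \<exists>!c. finite {g. c g \<noteq> 0} \<and> (\<forall>g. c g \<in> A g) \<and> x = (\<Sum>g\<in>{g. c g \<noteq> 0}. c g))"

definition graded_ring :: "('g::group_add \<Rightarrow> 'r::comm_ring_1 set) \<Rightarrow> bool" where
  "graded_ring Rg \<longleftrightarrow> gr_decomp Rg \<and> (\<forall>g h. \<forall>a\<in>Rg g. \<forall>b\<in>Rg h. a * b \<in> Rg (g + h))"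

definition graded_module ::
  "('r::comm_ring_1 \<Rightarrow> 'm::ab_group_add \<Rightarrow> 'm) \<Rightarrow> ('g::group_add \<Rightarrow> 'r set) \<Rightarrow> ('g \<Rightarrow> 'm set) \<Rightarrow> bool" where
  "graded_module scale Rg Mg \<longleftrightarrow> module scale \<and> graded_ring Rg \<and> gr_decomp Mg \<and>
     (\<forall>g h. \<forall>r\<in>Rg g. \<forall>m\<in>Mg h. scale r m \<in> Mg (g + h))"

definition homog :: "('g \<Rightarrow> 'b set) \<Rightarrow> 'b set" where
  "homog A = (\<Union>g. A g)"

definition gr_submodule :: "('r::comm_ring_1 \<Rightarrow> 'm::ab_group_add \<Rightarrow> 'm) \<Rightarrow> ('g \<Rightarrow> 'm set) \<Rightarrow> 'm set \<Rightarrow> bool" where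
  "gr_submodule scale A U \<longleftrightarrow> module.subspace scale U \<and>
     (\<forall>x\<in>U. \<exists>c. finite {g. c g \<noteq> 0} \<and> (\<forall>g. c g \<in> U \<inter> A g) \<and> x = (\<Sum>g\<in>{g. c g \<noteq> 0}. c g))"

definition gr_maximal :: "('r::comm_ring_1 \<Rightarrow> 'm::ab_group_add \<Rightarrow> 'm) \<Rightarrow> ('g \<Rightarrow> 'm set) \<Rightarrow> 'm set \<Rightarrow> bool" where
  "gr_maximal scale A U \<longleftrightarrow> gr_submodule scale A U \<and> U \<noteq> UNIV \<and>
     (\<forall>V. gr_submodule scale A V \<and> U \<subseteq> V \<longrightarrow> V = U \<or> V = UNIV)"

text \<open>Graded Jacobson radical of the module (= UNIV if there is no Gr-maximal submodule).\<close>
definition J_gr :: "('r::comm_ring_1 \<Rightarrow> 'm::ab_group_add \<Rightarrow> 'm) \<Rightarrow> ('g \<Rightarrow> 'm set) \<Rightarrow> 'm set" where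
  "J_gr scale A = \<Inter>{U. gr_maximal scale A U}"

definition gr_fin_gen :: "('r::comm_ring_1 \<Rightarrow> 'm::ab_group_add \<Rightarrow> 'm) \<Rightarrow> ('g \<Rightarrow> 'm set) \<Rightarrow> bool" where
  "gr_fin_gen scale A \<longleftrightarrow> (\<exists>S. finite S \<and> S \<subseteq> homog A \<and> module.span scale S = UNIV)"

definition ideal_times :: "('r::comm_ring_1 \<Rightarrow> 'm::ab_group_add \<Rightarrow> 'm) \<Rightarrow> 'r set \<Rightarrow> 'm set" where
  "ideal_times scale K = module.span scale {scale k m | k m. k \<in> K}"

definition gr_multiplication ::
  "('r::comm_ring_1 \<Rightarrow> 'm::ab_group_add \<Rightarrow> 'm) \<Rightarrow> ('g \<Rightarrow> 'r set) \<Rightarrow> ('g \<Rightarrow> 'm set) \<Rightarrow> bool" where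
  "gr_multiplication scale Rg Mg \<longleftrightarrow>
     (\<forall>U. gr_submodule scale Mg U \<longrightarrow> (\<exists>K. gr_submodule (*) Rg K \<and> U = ideal_times scale K))"

definition faithful :: "('r::comm_ring_1 \<Rightarrow> 'm::ab_group_add \<Rightarrow> 'm) \<Rightarrow> bool" where
  "faithful scale \<longleftrightarrow> (\<forall>r. (\<forall>m. scale r m = 0) \<longrightarrow> r = 0)"

definition colon :: "('r::comm_ring_1 \<Rightarrow> 'm::ab_group_add \<Rightarrow> 'm) \<Rightarrow> 'm set \<Rightarrow> 'r set" where
  "colon scale U = {r. \<forall>m. scale r m \<in> U}"

definition gr_weakly_J_semiprime ::
  "('r::comm_ring_1 \<Rightarrow> 'm::ab_group_add \<Rightarrow> 'm) \<Rightarrow> ('g \<Rightarrow> 'r set) \<Rightarrow> ('g \<Rightarrow> 'm set) \<Rightarrow> 'm set \<Rightarrow> bool" where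
  "gr_weakly_J_semiprime scale Rg Mg U \<longleftrightarrow> gr_submodule scale Mg U \<and> U \<noteq> UNIV \<and>
     (\<forall>g h r m (n::nat). r \<in> Rg g \<longrightarrow> m \<in> Mg h \<longrightarrow> n > 0 \<longrightarrow>
        scale (r ^ n) m \<noteq> 0 \<longrightarrow> scale (r ^ n) m \<in> U \<longrightarrow>
        scale r m \<in> {u + j | u j. u \<in> U \<and> j \<in> J_gr scale Mg})"

end

theory Submission
  imports Defs
begin
lemma gd_zero: "gr_decomp A \<Longrightarrow> 0 \<in> A g"
  by (simp add: gr_decomp_def)
lemma gd_diff: "gr_decomp A \<Longrightarrow> x \<in> A g \<Longrightarrow> y \<in> A g \<Longrightarrow> x - y \<in> A g"
  by (simp add: gr_decomp_def)
lemma gd_add: assumes "gr_decomp A" "x \<in> A g" "y \<in> A g" shows "x + y \<in> A g"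
proof -
  have "0 - y \<in> A g" by (rule gd_diff[OF assms(1) gd_zero[OF assms(1)] assms(3)])
  hence "x - (0 - y) \<in> A g" by (rule gd_diff[OF assms(1) assms(2)])
  thus ?thesis by simp
qed
lemma closed_sum:
  assumes "0 \<in> V" "\<forall>a\<in>V. \<forall>b\<in>V. a + b \<in> V" "\<forall>i\<in>T. f i \<in> V"
  shows "sum f T \<in> V"
  using assms(3) by (induct T rule: infinite_finite_induct) (auto simp: assms(1,2))
lemma gd_sum: "gr_decomp A \<Longrightarrow> \<forall>i\<in>T. f i \<in> A g \<Longrightarrow> sum f T \<in> A g"
  by (rule closed_sum) (auto intro: gd_zero gd_add)
lemma gd_ex: assumes "gr_decomp A" shows "\<exists>c. finite {g. c g \<noteq> 0} \<and> (\<forall>g. c g \<in> A g) \<and> x = (\<Sum>g\<in>{g. c g \<noteq> 0}. c g)"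
  using ex1_implies_ex[OF conjunct2[OF assms[unfolded gr_decomp_def], THEN spec[of _ x]]] .
lemma gd_uniq:
  assumes "gr_decomp A"
    "finite {g. c g \<noteq> 0}" "\<forall>g. c g \<in> A g" "x = (\<Sum>g\<in>{g. c g \<noteq> 0}. c g)"
    "finite {g. d g \<noteq> 0}" "\<forall>g. d g \<in> A g" "x = (\<Sum>g\<in>{g. d g \<noteq> 0}. d g)"
  shows "c = d"
proof -
  define P where "P = (\<lambda>c. finite {g. c g \<noteq> 0} \<and> (\<forall>g. c g \<in> A g) \<and> x = (\<Sum>g\<in>{g. c g \<noteq> 0}. c g))"
  have ex: "\<exists>!c. P c"
    using conjunct2[OF assms(1)[unfolded gr_decomp_def], THEN spec[of _ x]] unfolding P_def .
  have "P c" "P d" unfolding P_def using assms(2-) by blast+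
  with ex show ?thesis by blast
qed

lemma gd_collect:
  assumes gd: "gr_decomp A" and fin: "finite T" and y: "\<forall>i\<in>T. y i \<in> V \<and> y i \<in> A (d i)"
    and V: "0 \<in> V" "\<forall>a\<in>V. \<forall>b\<in>V. a + b \<in> V"
  shows "\<exists>c. finite {g. c g \<noteq> 0} \<and> (\<forall>g. c g \<in> V \<inter> A g) \<and> (\<Sum>i\<in>T. y i) = (\<Sum>g\<in>{g. c g \<noteq> 0}. c g)"
proof -
  define c where "c g = (\<Sum>i\<in>{i\<in>T. d i = g}. y i)" for g
  have sub: "{g. c g \<noteq> 0} \<subseteq> d ` T"
  proof
    fix g assume "g \<in> {g. c g \<noteq> 0}"
    hence "{i\<in>T. d i = g} \<noteq> {}" unfolding c_def by (cases "{i\<in>T. d i = g} = {}") auto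
    thus "g \<in> d ` T" by auto
  qed
  have f: "finite {g. c g \<noteq> 0}" using sub fin finite_subset by blast
  have cV: "c g \<in> V \<inter> A g" for g
  proof
    show "c g \<in> V" unfolding c_def by (rule closed_sum[OF V]) (use y in auto)
    show "c g \<in> A g" unfolding c_def by (rule gd_sum[OF gd]) (use y in auto)
  qed
  have "(\<Sum>i\<in>T. y i) = (\<Sum>g\<in>d ` T. c g)"
    unfolding c_def by (rule sum.image_gen[OF fin])
  also have "\<dots> = (\<Sum>g\<in>{g. c g \<noteq> 0}. c g)"
    by (rule sum.mono_neutral_right) (use fin sub in auto)
  finally have e: "(\<Sum>i\<in>T. y i) = (\<Sum>g\<in>{g. c g \<noteq> 0}. c g)" .
  show ?thesis
    using f cV e by (intro exI[of _ c] conjI allI) simp_all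
qed

lemma module_mult: "module ((*) :: 'a::comm_ring_1 \<Rightarrow> 'a \<Rightarrow> 'a)"
  by unfold_locales (auto simp: algebra_simps)

locale gm =
  fixes scale :: "'r::comm_ring_1 \<Rightarrow> 'm::ab_group_add \<Rightarrow> 'm"
    and Rg :: "'g::group_add \<Rightarrow> 'r set"
    and Mg :: "'g \<Rightarrow> 'm set"
  assumes gm: "graded_module scale Rg Mg"

sublocale gm \<subseteq> module scale using gm by (simp add: graded_module_def)

context gm begin

lemma gdR: "gr_decomp Rg" using gm by (simp add: graded_module_def graded_ring_def)
lemma gdM: "gr_decomp Mg" using gm by (simp add: graded_module_def)
lemma mulR: "a \<in> Rg g \<Longrightarrow> b \<in> Rg h \<Longrightarrow> a * b \<in> Rg (g + h)"
  using gm by (simp add: graded_module_def graded_ring_def)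
lemma scM: "r \<in> Rg g \<Longrightarrow> m \<in> Mg h \<Longrightarrow> scale r m \<in> Mg (g + h)"
  using gm by (simp add: graded_module_def)

lemma span_gr:
  assumes S: "S \<subseteq> homog Mg"
  shows "gr_submodule scale Mg (span S)"
  unfolding gr_submodule_def
proof (intro conjI ballI)
  show "subspace (span S)" by simp
  fix x assume "x \<in> span S"
  then have "\<exists>t r. x = (\<Sum>a\<in>t. scale (r a) a) \<and> finite t \<and> t \<subseteq> S"
    unfolding span_explicit mem_Collect_eq .
  then obtain t where "\<exists>r. x = (\<Sum>a\<in>t. scale (r a) a) \<and> finite t \<and> t \<subseteq> S" ..
  then obtain r where xtr: "x = (\<Sum>a\<in>t. scale (r a) a) \<and> finite t \<and> t \<subseteq> S" ..
  note x = conjunct1[OF xtr] and t = conjunct1[OF conjunct2[OF xtr]] conjunct2[OF conjunct2[OF xtr]]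
  have "\<forall>a\<in>S. \<exists>g. a \<in> Mg g" using S unfolding homog_def by blast
  from bchoice[OF this] obtain \<delta> where \<delta>: "\<forall>a\<in>S. a \<in> Mg (\<delta> a)" ..
  have "\<forall>a. \<exists>c. finite {g. c g \<noteq> 0} \<and> (\<forall>g. c g \<in> Rg g) \<and> r a = (\<Sum>g\<in>{g. c g \<noteq> 0}. c g)"
    by (intro allI) (rule gd_ex[OF gdR])
  from choice[OF this] obtain C where C0: "\<forall>a. finite {g. C a g \<noteq> 0} \<and> (\<forall>g. C a g \<in> Rg g) \<and> r a = (\<Sum>g\<in>{g. C a g \<noteq> 0}. C a g)"
    ..
  have C: "\<And>a. finite {g. C a g \<noteq> 0}" "\<And>a g. C a g \<in> Rg g"
    "\<And>a. r a = (\<Sum>g\<in>{g. C a g \<noteq> 0}. C a g)" using C0 by simp_all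
  define F where "F a = {g. C a g \<noteq> 0}" for a
  have "x = (\<Sum>a\<in>t. \<Sum>g\<in>F a. scale (C a g) a)"
    unfolding x F_def by (subst C(3)) (simp add: scale_sum_left)
  also have "\<dots> = (\<Sum>(a,g)\<in>Sigma t F. scale (C a g) a)"
    by (rule sum.Sigma) (use t C(1) F_def in auto)
  also have "\<dots> = (\<Sum>p\<in>Sigma t F. scale (C (fst p) (snd p)) (fst p))"
    by (simp add: case_prod_beta)
  finally have xe: "x = (\<Sum>p\<in>Sigma t F. scale (C (fst p) (snd p)) (fst p))" .
  have fS: "finite (Sigma t F)" using t C(1) F_def by auto
  have "\<exists>c. finite {g. c g \<noteq> 0} \<and> (\<forall>g. c g \<in> span S \<inter> Mg g) \<and>
     (\<Sum>p\<in>Sigma t F. scale (C (fst p) (snd p)) (fst p)) = (\<Sum>g\<in>{g. c g \<noteq> 0}. c g)"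
  proof (rule gd_collect[OF gdM fS, where d = "\<lambda>p. snd p + \<delta> (fst p)"])
    show "\<forall>i\<in>Sigma t F. scale (C (fst i) (snd i)) (fst i) \<in> span S \<and>
        scale (C (fst i) (snd i)) (fst i) \<in> Mg (snd i + \<delta> (fst i))"
    proof (intro ballI conjI)
      fix i assume i: "i \<in> Sigma t F"
      then have fi: "fst i \<in> S" using t by auto
      show "scale (C (fst i) (snd i)) (fst i) \<in> span S" by (rule span_scale, rule span_base, rule fi)
      show "scale (C (fst i) (snd i)) (fst i) \<in> Mg (snd i + \<delta> (fst i))"
        by (rule scM[OF C(2)]) (use \<delta> fi in blast)
    qed
  next
    show "0 \<in> span S" by (rule span_zero)
  next
    show "\<forall>a\<in>span S. \<forall>b\<in>span S. a + b \<in> span S" using span_add by blast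
  qed
  then obtain c where cc: "finite {g. c g \<noteq> 0} \<and> (\<forall>g. c g \<in> span S \<inter> Mg g) \<and>
     (\<Sum>p\<in>Sigma t F. scale (C (fst p) (snd p)) (fst p)) = (\<Sum>g\<in>{g. c g \<noteq> 0}. c g)" ..
  note c = conjunct1[OF cc] conjunct1[OF conjunct2[OF cc]] conjunct2[OF conjunct2[OF cc]]
  show "\<exists>c. finite {g. c g \<noteq> 0} \<and> (\<forall>g. c g \<in> span S \<inter> Mg g) \<and> x = (\<Sum>g\<in>{g. c g \<noteq> 0}. c g)"
  proof (rule exI[of _ c], intro conjI)
    show "x = (\<Sum>g\<in>{g. c g \<noteq> 0}. c g)" using xe c(3) by (rule trans)
  qed (rule c(1), rule c(2))
qed

end

interpretation Rm: module "(*) :: 'a::comm_ring_1 \<Rightarrow> 'a \<Rightarrow> 'a"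
  by (rule module_mult)

declare Rm.scale_scale [simp del]

lemma gm_ring: "graded_ring Rg \<Longrightarrow> gm (*) Rg Rg"
  unfolding gm_def graded_module_def
  using module_mult by (auto simp: graded_ring_def)

lemma J_sub: "module scale \<Longrightarrow> module.subspace scale (J_gr scale A)"
  unfolding J_gr_def by (rule module.subspace_Inter) (auto simp: gr_maximal_def gr_submodule_def)

context gm begin

lemma gmR: "gm (*) Rg Rg"
  using gm by (intro gm_ring) (simp add: graded_module_def)

lemma colon_gr:
  assumes U: "gr_submodule scale Mg U"
  shows "gr_submodule (*) Rg (colon scale U)"
proof -
  have Us: "subspace U" using U by (simp add: gr_submodule_def)
  have sub: "Rm.subspace (colon scale U)"
  proof (rule Rm.subspaceI)
    show "0 \<in> colon scale U" unfolding colon_def using subspace_0[OF Us] by simp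
  next
    fix x y assume "x \<in> colon scale U" "y \<in> colon scale U"
    thus "x + y \<in> colon scale U" unfolding colon_def
      by (simp add: scale_left_distrib subspace_add[OF Us])
  next
    fix c x assume x: "x \<in> colon scale U"
    show "c * x \<in> colon scale U" unfolding colon_def
    proof (rule CollectI, rule allI)
      fix m
      have "scale (c * x) m = scale c (scale x m)" by simp
      also have "\<dots> \<in> U" by (rule subspace_scale[OF Us]) (use x in \<open>simp add: colon_def\<close>)
      finally show "scale (c * x) m \<in> U" .
    qed
  qed
  have dec: "\<exists>c. finite {g. c g \<noteq> 0} \<and> (\<forall>g. c g \<in> colon scale U \<inter> Rg g) \<and> r = (\<Sum>g\<in>{g. c g \<noteq> 0}. c g)"
    if r: "r \<in> colon scale U" for r
  proof -
    obtain c where cc: "finite {g. c g \<noteq> 0} \<and> (\<forall>g. c g \<in> Rg g) \<and> r = (\<Sum>g\<in>{g. c g \<noteq> 0}. c g)"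
      using gd_ex[OF gdR, of r] ..
    define G where "G = {g. c g \<noteq> 0}"
    have fG: "finite G" and cR: "\<And>g. c g \<in> Rg g" and cr: "r = (\<Sum>g\<in>G. c g)"
      using cc unfolding G_def by simp_all
    have hom: "scale (c g) m \<in> U" if m: "m \<in> Mg h" for g h m
    proof -
      define e where "e k = scale (c (k - h)) m" for k
      have eA: "\<forall>k. e k \<in> Mg k"
      proof
        fix k
        have "scale (c (k - h)) m \<in> Mg (k - h + h)" by (rule scM[OF cR m])
        thus "e k \<in> Mg k" unfolding e_def by simp
      qed
      have esup: "{k. e k \<noteq> 0} \<subseteq> (\<lambda>g. g + h) ` G"
      proof
        fix k assume "k \<in> {k. e k \<noteq> 0}"
        hence "c (k - h) \<noteq> 0" unfolding e_def by auto
        hence "k - h \<in> G" unfolding G_def by simp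
        moreover have "k = (k - h) + h" by simp
        ultimately show "k \<in> (\<lambda>g. g + h) ` G" by (rule rev_image_eqI)
      qed
      have efin: "finite {k. e k \<noteq> 0}" using esup fG finite_subset by blast
      have "scale r m = scale (\<Sum>g\<in>G. c g) m" using cr by simp
      also have "\<dots> = (\<Sum>g\<in>G. scale (c g) m)" by (rule scale_sum_left)
      also have "\<dots> = (\<Sum>k\<in>(\<lambda>g. g + h) ` G. e k)"
        by (subst sum.reindex) (auto simp: inj_on_def e_def)
      also have "\<dots> = (\<Sum>k\<in>{k. e k \<noteq> 0}. e k)"
        by (rule sum.mono_neutral_right) (use fG esup in auto)
      finally have rm: "scale r m = (\<Sum>k\<in>{k. e k \<noteq> 0}. e k)" .
      have "scale r m \<in> U" using r unfolding colon_def by simp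
      with U obtain u where uu: "finite {k. u k \<noteq> 0} \<and> (\<forall>k. u k \<in> U \<inter> Mg k) \<and> scale r m = (\<Sum>k\<in>{k. u k \<noteq> 0}. u k)"
        unfolding gr_submodule_def by (elim conjE) (drule bspec, assumption, erule exE, assumption)
      have uA: "\<forall>k. u k \<in> Mg k" and uU: "\<forall>k. u k \<in> U" using uu by auto
      have "e = u"
        by (rule gd_uniq[OF gdM efin eA rm]) (use uu uA in simp_all)
      hence "e (g + h) \<in> U" using uU by simp
      thus ?thesis unfolding e_def by simp
    qed
    have inU: "scale (c g) m \<in> U" for g m
    proof -
      obtain d where dd: "finite {h. d h \<noteq> 0} \<and> (\<forall>h. d h \<in> Mg h) \<and> m = (\<Sum>h\<in>{h. d h \<noteq> 0}. d h)"
        using gd_ex[OF gdM, of m] ..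
      hence "scale (c g) m = (\<Sum>h\<in>{h. d h \<noteq> 0}. scale (c g) (d h))"
        using scale_sum_right by metis
      also have "\<dots> \<in> U" by (rule subspace_sum[OF Us]) (use hom dd in blast)
      finally show ?thesis .
    qed
    show ?thesis
    proof (rule exI[of _ c], intro conjI allI)
      show "finite {g. c g \<noteq> 0}" using fG G_def by simp
      show "r = (\<Sum>g\<in>{g. c g \<noteq> 0}. c g)" using cr G_def by simp
      fix g show "c g \<in> colon scale U \<inter> Rg g" using inU cR unfolding colon_def by simp
    qed
  qed
  show ?thesis unfolding gr_submodule_def using sub dec by blast
qed

lemma KM_sub:
  assumes K: "gr_submodule (*) Rg K" and V: "subspace V"
    and hk: "\<And>k g m. k \<in> K \<Longrightarrow> k \<in> Rg g \<Longrightarrow> scale k m \<in> V"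
  shows "ideal_times scale K \<subseteq> V"
  unfolding ideal_times_def
proof (rule span_minimal[OF _ V])
  show "{scale k m |k m. k \<in> K} \<subseteq> V"
  proof
    fix y assume "y \<in> {scale k m |k m. k \<in> K}"
    then obtain k m where y: "y = scale k m" and k: "k \<in> K" by blast
    from K k obtain c where cc: "finite {g. c g \<noteq> 0} \<and> (\<forall>g. c g \<in> K \<inter> Rg g) \<and> k = (\<Sum>g\<in>{g. c g \<noteq> 0}. c g)"
      unfolding gr_submodule_def by (elim conjE) (drule bspec, assumption, erule exE, assumption)
    have "y = (\<Sum>g\<in>{g. c g \<noteq> 0}. scale (c g) m)"
      unfolding y using cc scale_sum_left by metis
    also have "\<dots> \<in> V" by (rule subspace_sum[OF V]) (use hk cc in blast)
    finally show "y \<in> V" .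
  qed
qed

lemma single_mult:
  assumes "gr_multiplication scale Rg Mg" "m \<in> Mg h"
  obtains K where "gr_submodule (*) Rg K" "span {m} = ideal_times scale K"
proof -
  have "gr_submodule scale Mg (span {m})" by (rule span_gr) (use assms(2) in \<open>auto simp: homog_def\<close>)
  thus ?thesis using assms(1) that unfolding gr_multiplication_def by blast
qed

lemma nil_J:
  assumes x: "x \<in> Rg g" and xn: "x ^ n = 0"
  shows "x \<in> J_gr (*) Rg"
  unfolding J_gr_def
proof (rule InterI)
  interpret R: gm "(*)" Rg Rg by (rule gmR)
  fix P assume "P \<in> {U. gr_maximal (*) Rg U}"
  hence P: "gr_submodule (*) Rg P" and PU: "P \<noteq> UNIV"
    and Pmax: "\<And>V. gr_submodule (*) Rg V \<Longrightarrow> P \<subseteq> V \<Longrightarrow> V = P \<or> V = UNIV"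
    unfolding gr_maximal_def by auto
  have Ps: "Rm.subspace P" using P by (simp add: gr_submodule_def)
  show "x \<in> P"
  proof (rule ccontr)
    assume xP: "x \<notin> P"
    define H where "H = P \<inter> homog Rg"
    define V where "V = Rm.span (insert x H)"
    have Vgr: "gr_submodule (*) Rg V" unfolding V_def
      by (rule R.span_gr) (use x in \<open>auto simp: H_def homog_def\<close>)
    have PV: "P \<subseteq> V"
    proof
      fix p assume p: "p \<in> P"
      from P p obtain c where cc: "finite {g. c g \<noteq> 0} \<and> (\<forall>g. c g \<in> P \<inter> Rg g) \<and> p = (\<Sum>g\<in>{g. c g \<noteq> 0}. c g)"
        unfolding gr_submodule_def by (elim conjE) (drule bspec, assumption, erule exE, assumption)
      have "(\<Sum>g\<in>{g. c g \<noteq> 0}. c g) \<in> V" unfolding V_def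
      proof (rule Rm.span_sum)
        fix g show "c g \<in> Rm.span (insert x H)"
          by (rule Rm.span_base) (use cc in \<open>auto simp: H_def homog_def\<close>)
      qed
      thus "p \<in> V" using cc by simp
    qed
    have xV: "x \<in> V" unfolding V_def by (rule Rm.span_base) simp
    have "V = UNIV" using Pmax[OF Vgr PV] xV xP by blast
    hence "1 \<in> Rm.span (insert x H)" unfolding V_def by simp
    then obtain k where k: "1 - k * x \<in> Rm.span H" unfolding Rm.span_breakdown_eq by blast
    have "Rm.span H \<subseteq> P" by (rule Rm.span_minimal[OF _ Ps]) (auto simp: H_def)
    with k have k1: "1 - k * x \<in> P" by blast
    have "(k * x) ^ n = 0" using xn by (simp add: power_mult_distrib)
    hence "1 = (1 - k * x) * (\<Sum>i<n. (k * x) ^ i)" using one_diff_power_eq[of "k * x" n] by simp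
    also have "\<dots> = (\<Sum>i<n. (k * x) ^ i) * (1 - k * x)" by (rule mult.commute)
    also have "\<dots> \<in> P" by (rule Rm.subspace_scale[OF Ps k1])
    finally have one: "1 \<in> P" .
    have "P = UNIV"
    proof (rule set_eqI, rule iffI)
      fix z assume "z \<in> (UNIV :: 'r set)"
      have "z * 1 \<in> P" by (rule Rm.subspace_scale[OF Ps one])
      thus "z \<in> P" by simp
    qed simp
    with PU show False by simp
  qed
qed

end

context module begin

lemma nak_alg:
  "scale e (scale e0 y - (scale qb yb + (\<Sum>t\<in>S. scale (Q t) (f t)))) +
   scale qb (scale e yb - (\<Sum>t\<in>S. scale (R t) (f t)))
   = scale (e * e0) y - (\<Sum>t\<in>S. scale (e * Q t + qb * R t) (f t))"
proof -
  have 1: "scale e (\<Sum>t\<in>S. scale (Q t) (f t)) = (\<Sum>t\<in>S. scale (e * Q t) (f t))"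
    by (simp add: scale_sum_right)
  have 2: "scale qb (\<Sum>t\<in>S. scale (R t) (f t)) = (\<Sum>t\<in>S. scale (qb * R t) (f t))"
    by (simp add: scale_sum_right)
  have 3: "(\<Sum>t\<in>S. scale (e * Q t + qb * R t) (f t)) =
      (\<Sum>t\<in>S. scale (e * Q t) (f t)) + (\<Sum>t\<in>S. scale (qb * R t) (f t))"
    by (simp add: scale_left_distrib sum.distrib)
  have 4: "scale e (scale qb yb) = scale qb (scale e yb)" by (rule scale_left_commute)
  show ?thesis
    unfolding 3 scale_right_diff_distrib scale_right_distrib 1 2 4
    by (simp add: algebra_simps)
qed

lemma nak:
  assumes P: "Rm.subspace P" and fS: "finite S" and L: "subspace L"
  shows "1 - e0 \<in> P \<Longrightarrow> (\<forall>s\<in>S. \<exists>q. (\<forall>t\<in>S. q t \<in> P) \<and> scale e0 (f s) - (\<Sum>t\<in>S. scale (q t) (f t)) \<in> L)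
     \<Longrightarrow> \<exists>a. 1 - a \<in> P \<and> (\<forall>s\<in>S. scale a (f s) \<in> L)"
  using fS
proof (induction S arbitrary: e0 rule: finite_induct)
  case empty
  show ?case by (rule exI[of _ 1]) (simp add: Rm.subspace_0[OF P])
next
  case (insert b S)
  note bS = insert.hyps(2)
  have "\<forall>s\<in>insert b S. \<exists>q. (\<forall>t\<in>insert b S. q t \<in> P) \<and> scale e0 (f s) - (\<Sum>t\<in>insert b S. scale (q t) (f t)) \<in> L"
    by (rule insert.prems(2))
  from bchoice[OF this] obtain Q where
    Q: "\<forall>s\<in>insert b S. (\<forall>t\<in>insert b S. Q s t \<in> P) \<and> scale e0 (f s) - (\<Sum>t\<in>insert b S. scale (Q s t) (f t)) \<in> L" ..
  have QP: "Q s t \<in> P" if "s \<in> insert b S" "t \<in> insert b S" for s t using Q that by blast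
  have QL: "scale e0 (f s) - (scale (Q s b) (f b) + (\<Sum>t\<in>S. scale (Q s t) (f t))) \<in> L" if "s \<in> insert b S" for s
  proof -
    have "scale e0 (f s) - (\<Sum>t\<in>insert b S. scale (Q s t) (f t)) \<in> L" using Q that by blast
    thus ?thesis unfolding sum.insert[OF insert.hyps(1) bS] .
  qed
  define e where "e = e0 - Q b b"
  have hb: "scale e (f b) - (\<Sum>t\<in>S. scale (Q b t) (f t)) \<in> L"
  proof -
    have eq: "scale e (f b) - (\<Sum>t\<in>S. scale (Q b t) (f t)) =
        scale e0 (f b) - (scale (Q b b) (f b) + (\<Sum>t\<in>S. scale (Q b t) (f t)))"
      unfolding e_def by (simp add: scale_left_diff_distrib diff_diff_eq)
    show ?thesis unfolding eq by (rule QL[OF insertI1])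
  qed
  have e1: "1 - e \<in> P"
  proof -
    have eq: "1 - e = (1 - e0) + Q b b" unfolding e_def by simp
    show ?thesis unfolding eq by (rule Rm.subspace_add[OF P insert.prems(1) QP[OF insertI1 insertI1]])
  qed
  have ee1: "1 - e * e0 \<in> P"
  proof -
    have eq: "1 - e * e0 = (1 - e) + e * (1 - e0)" by (simp add: algebra_simps)
    show ?thesis unfolding eq by (rule Rm.subspace_add[OF P e1 Rm.subspace_scale[OF P insert.prems(1)]])
  qed
  have hyp: "\<forall>s\<in>S. \<exists>q. (\<forall>t\<in>S. q t \<in> P) \<and> scale (e * e0) (f s) - (\<Sum>t\<in>S. scale (q t) (f t)) \<in> L"
  proof
    fix s assume s: "s \<in> S"
    show "\<exists>q. (\<forall>t\<in>S. q t \<in> P) \<and> scale (e * e0) (f s) - (\<Sum>t\<in>S. scale (q t) (f t)) \<in> L"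
    proof (rule exI[of _ "\<lambda>t. e * Q s t + Q s b * Q b t"], intro conjI ballI)
      fix t assume t: "t \<in> S"
      show "e * Q s t + Q s b * Q b t \<in> P"
        using s t by (intro Rm.subspace_add[OF P] Rm.subspace_scale[OF P] QP) auto
    next
      have "scale e (scale e0 (f s) - (scale (Q s b) (f b) + (\<Sum>t\<in>S. scale (Q s t) (f t)))) +
          scale (Q s b) (scale e (f b) - (\<Sum>t\<in>S. scale (Q b t) (f t))) \<in> L"
        using s by (intro subspace_add[OF L] subspace_scale[OF L] QL hb) auto
      thus "scale (e * e0) (f s) - (\<Sum>t\<in>S. scale (e * Q s t + Q s b * Q b t) (f t)) \<in> L"
        unfolding nak_alg .
    qed
  qed
  obtain a where a1: "1 - a \<in> P" and aS: "\<forall>s\<in>S. scale a (f s) \<in> L"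
    using insert.IH[OF ee1 hyp] by blast
  show ?case
  proof (rule exI[of _ "a * e"], intro conjI ballI)
    have eq: "1 - a * e = (1 - a) + a * (1 - e)" by (simp add: algebra_simps)
    show "1 - a * e \<in> P" unfolding eq by (rule Rm.subspace_add[OF P a1 Rm.subspace_scale[OF P e1]])
  next
    fix s assume s: "s \<in> insert b S"
    show "scale (a * e) (f s) \<in> L"
    proof (cases "s = b")
      case False
      hence "s \<in> S" using s by simp
      hence "scale e (scale a (f s)) \<in> L" using aS subspace_scale[OF L] by blast
      thus ?thesis by (simp add: mult.commute)
    next
      case True
      have A: "scale a (scale e (f b) - (\<Sum>t\<in>S. scale (Q b t) (f t))) \<in> L"
        by (rule subspace_scale[OF L hb])
      have B: "(\<Sum>t\<in>S. scale (Q b t) (scale a (f t))) \<in> L"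
        by (rule subspace_sum[OF L]) (use aS subspace_scale[OF L] in blast)
      have "scale (a * e) (f b) = scale a (scale e (f b) - (\<Sum>t\<in>S. scale (Q b t) (f t)))
          + (\<Sum>t\<in>S. scale (Q b t) (scale a (f t)))"
        by (simp add: scale_right_diff_distrib scale_sum_right mult.commute)
      thus ?thesis using subspace_add[OF L A B] True by simp
    qed
  qed
qed

lemma nak_app:
  assumes P: "Rm.subspace P" and fS: "finite S" and sp: "span S = UNIV"
    and PM: "\<And>m. m \<in> ideal_times scale P"
  shows "\<exists>a. 1 - a \<in> P \<and> (\<forall>m. scale a m = 0)"
proof -
  define PS where "PS = {y. \<exists>q. (\<forall>t\<in>S. q t \<in> P) \<and> y = (\<Sum>t\<in>S. scale (q t) t)}"
  have PSs: "subspace PS"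
  proof (rule subspaceI)
    show "0 \<in> PS" unfolding PS_def
      by (rule CollectI, rule exI[of _ "\<lambda>t. 0"]) (simp add: Rm.subspace_0[OF P])
  next
    fix x y assume "x \<in> PS" "y \<in> PS"
    then obtain q q' where q: "\<forall>t\<in>S. q t \<in> P" "x = (\<Sum>t\<in>S. scale (q t) t)"
      and q': "\<forall>t\<in>S. q' t \<in> P" "y = (\<Sum>t\<in>S. scale (q' t) t)" unfolding PS_def by blast
    show "x + y \<in> PS" unfolding PS_def
    proof (rule CollectI, rule exI[of _ "\<lambda>t. q t + q' t"], intro conjI)
      show "\<forall>t\<in>S. q t + q' t \<in> P" using q(1) q'(1) Rm.subspace_add[OF P] by blast
      show "x + y = (\<Sum>t\<in>S. scale (q t + q' t) t)"
        unfolding q(2) q'(2) by (simp add: scale_left_distrib sum.distrib)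
    qed
  next
    fix c x assume "x \<in> PS"
    then obtain q where q: "\<forall>t\<in>S. q t \<in> P" "x = (\<Sum>t\<in>S. scale (q t) t)" unfolding PS_def by blast
    show "scale c x \<in> PS" unfolding PS_def
    proof (rule CollectI, rule exI[of _ "\<lambda>t. c * q t"], intro conjI)
      show "\<forall>t\<in>S. c * q t \<in> P" using q(1) Rm.subspace_scale[OF P] by blast
      show "scale c x = (\<Sum>t\<in>S. scale (c * q t) t)"
        unfolding q(2) by (simp add: scale_sum_right)
    qed
  qed
  have "ideal_times scale P \<subseteq> PS" unfolding ideal_times_def
  proof (rule span_minimal[OF _ PSs], rule subsetI)
    fix y assume "y \<in> {scale k m |k m. k \<in> P}"
    then obtain p m where y: "y = scale p m" and p: "p \<in> P" by blast
    have "m \<in> span S" using sp by simp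
    then obtain u where m: "m = (\<Sum>v\<in>S. scale (u v) v)" unfolding span_finite[OF fS] by blast
    show "y \<in> PS" unfolding PS_def
    proof (rule CollectI, rule exI[of _ "\<lambda>t. p * u t"], intro conjI)
      show "\<forall>t\<in>S. p * u t \<in> P"
      proof
        fix t have "u t * p \<in> P" by (rule Rm.subspace_scale[OF P p])
        thus "p * u t \<in> P" by (simp add: mult.commute)
      qed
      show "y = (\<Sum>t\<in>S. scale (p * u t) t)" unfolding y m by (simp add: scale_sum_right)
    qed
  qed
  hence allPS: "\<And>s. s \<in> PS" using PM by blast
  have "\<exists>a. 1 - a \<in> P \<and> (\<forall>s\<in>S. scale a (id s) \<in> {0})"
  proof (rule nak[OF P fS subspace_single_0])
    show "1 - 1 \<in> P" by (simp add: Rm.subspace_0[OF P])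
    show "\<forall>s\<in>S. \<exists>q. (\<forall>t\<in>S. q t \<in> P) \<and> scale 1 (id s) - (\<Sum>t\<in>S. scale (q t) (id t)) \<in> {0}"
    proof
      fix s assume "s \<in> S"
      from allPS[of s] obtain q where "\<forall>t\<in>S. q t \<in> P" "s = (\<Sum>t\<in>S. scale (q t) t)"
        unfolding PS_def by blast
      thus "\<exists>q. (\<forall>t\<in>S. q t \<in> P) \<and> scale 1 (id s) - (\<Sum>t\<in>S. scale (q t) (id t)) \<in> {0}"
        by (intro exI[of _ q]) simp
    qed
  qed
  then obtain a where a: "1 - a \<in> P" "\<forall>s\<in>S. scale a s = 0" by auto
  have "span S \<subseteq> {m. scale a m = 0}"
  proof (rule span_minimal)
    show "S \<subseteq> {m. scale a m = 0}" using a(2) by blast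
    show "subspace {m. scale a m = 0}"
    proof (rule subspaceI)
      fix c x assume "x \<in> {m. scale a m = 0}"
      hence "scale c (scale a x) = 0" by simp
      thus "scale c x \<in> {m. scale a m = 0}" by (simp add: mult.commute[of a c])
    qed (auto simp: scale_right_distrib)
  qed
  thus ?thesis using a(1) sp by blast
qed

end

lemma max_ideal:
  assumes C: "Rm.subspace C" and C1: "(1::'a::comm_ring_1) \<notin> C"
  shows "\<exists>P. Rm.subspace P \<and> C \<subseteq> P \<and> 1 \<notin> P \<and> (\<forall>Q. Rm.subspace Q \<and> P \<subseteq> Q \<and> 1 \<notin> Q \<longrightarrow> Q = P)"
proof -
  define \<A> where "\<A> = {Q. Rm.subspace Q \<and> C \<subseteq> Q \<and> (1::'a) \<notin> Q}"
  have "\<exists>M\<in>\<A>. \<forall>X\<in>\<A>. M \<subseteq> X \<longrightarrow> X = M"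
  proof (rule subset_Zorn_nonempty)
    show "\<A> \<noteq> {}" using C C1 unfolding \<A>_def by blast
  next
    fix \<C> assume ne: "\<C> \<noteq> {}" and ch: "subset.chain \<A> \<C>"
    hence sub: "\<C> \<subseteq> \<A>" and cmp: "\<forall>X\<in>\<C>. \<forall>Y\<in>\<C>. X \<subseteq> Y \<or> Y \<subseteq> X"
      by (auto simp: subset_chain_def)
    obtain X0 where X0: "X0 \<in> \<C>" using ne by blast
    have sp: "Rm.subspace X" if "X \<in> \<C>" for X using sub that unfolding \<A>_def by blast
    have "Rm.subspace (\<Union>\<C>)"
    proof (rule Rm.subspaceI)
      show "0 \<in> \<Union>\<C>" using Rm.subspace_0[OF sp[OF X0]] X0 by blast
    next
      fix x y assume "x \<in> \<Union>\<C>" "y \<in> \<Union>\<C>"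
      then obtain X Y where X: "X \<in> \<C>" "x \<in> X" and Y: "Y \<in> \<C>" "y \<in> Y" by blast
      show "x + y \<in> \<Union>\<C>"
      proof (cases "X \<subseteq> Y")
        case True
        hence "x + y \<in> Y" using Rm.subspace_add[OF sp[OF Y(1)]] X Y by blast
        thus ?thesis using Y by blast
      next
        case False
        hence "Y \<subseteq> X" using cmp X Y by blast
        hence "x + y \<in> X" using Rm.subspace_add[OF sp[OF X(1)]] X Y by blast
        thus ?thesis using X by blast
      qed
    next
      fix c x assume "x \<in> \<Union>\<C>"
      then obtain X where X: "X \<in> \<C>" "x \<in> X" by blast
      hence "c * x \<in> X" using Rm.subspace_scale[OF sp[OF X(1)]] by blast
      thus "c * x \<in> \<Union>\<C>" using X by blast
    qed
    moreover have "C \<subseteq> \<Union>\<C>" using X0 sub unfolding \<A>_def by blast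
    moreover have "1 \<notin> \<Union>\<C>" using sub unfolding \<A>_def by blast
    ultimately show "\<Union>\<C> \<in> \<A>" unfolding \<A>_def by blast
  qed
  then obtain M where M: "M \<in> \<A>" "\<forall>X\<in>\<A>. M \<subseteq> X \<longrightarrow> X = M" by blast
  show ?thesis
  proof (rule exI[of _ M], intro conjI allI impI)
    show "Rm.subspace M" "C \<subseteq> M" "1 \<notin> M" using M(1) unfolding \<A>_def by blast+
    fix Q assume Q: "Rm.subspace Q \<and> M \<subseteq> Q \<and> 1 \<notin> Q"
    hence "Q \<in> \<A>" using M(1) unfolding \<A>_def by blast
    thus "Q = M" using M(2) Q by blast
  qed
qed

context gm begin

lemma cancel:
  assumes fg: "gr_fin_gen scale Mg" and fa: "faithful scale" and mu: "gr_multiplication scale Rg Mg"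
    and B: "Rm.subspace B" and xB: "\<And>m. scale x m \<in> ideal_times scale B"
  shows "x \<in> B"
proof (rule ccontr)
  assume nx: "x \<notin> B"
  define C where "C = {a. a * x \<in> B}"
  have Cs: "Rm.subspace C"
  proof (rule Rm.subspaceI)
    show "0 \<in> C" unfolding C_def using Rm.subspace_0[OF B] by simp
  next
    fix a b assume "a \<in> C" "b \<in> C"
    thus "a + b \<in> C" unfolding C_def using Rm.subspace_add[OF B] by (simp add: distrib_right)
  next
    fix c a assume aC: "a \<in> C"
    have "a * x \<in> B" using aC unfolding C_def by simp
    hence "c * (a * x) \<in> B" by (rule Rm.subspace_scale[OF B])
    thus "c * a \<in> C" unfolding C_def by (simp add: mult.assoc)
  qed
  have C1: "1 \<notin> C" unfolding C_def using nx by simp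
  obtain P where Ps: "Rm.subspace P" and CP: "C \<subseteq> P" and P1: "1 \<notin> P"
    and Pmax: "\<And>Q. Rm.subspace Q \<Longrightarrow> P \<subseteq> Q \<Longrightarrow> 1 \<notin> Q \<Longrightarrow> Q = P"
    using max_ideal[OF Cs C1] by blast
  obtain S where fS: "finite S" and Sh: "S \<subseteq> homog Mg" and sp: "span S = UNIV"
    using fg unfolding gr_fin_gen_def by blast
  define PM where "PM = ideal_times scale P"
  have PMs: "subspace PM" unfolding PM_def ideal_times_def by simp
  have "\<exists>m\<in>S. m \<notin> PM"
  proof (rule ccontr)
    assume "\<not> (\<exists>m\<in>S. m \<notin> PM)"
    hence "S \<subseteq> PM" by blast
    hence "span S \<subseteq> PM" by (rule span_minimal[OF _ PMs])
    hence all: "\<And>m. m \<in> ideal_times scale P" using sp unfolding PM_def by blast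
    obtain a where a: "1 - a \<in> P" "\<forall>m. scale a m = 0" using nak_app[OF Ps fS sp all] by blast
    have "a = 0" using fa a(2) unfolding faithful_def by blast
    thus False using a(1) P1 by simp
  qed
  then obtain m where mS: "m \<in> S" and mPM: "m \<notin> PM" by blast
  obtain h where mh: "m \<in> Mg h" using mS Sh unfolding homog_def by blast
  obtain K where Kgr: "gr_submodule (*) Rg K" and Km: "span {m} = ideal_times scale K"
    using single_mult[OF mu mh] by blast
  have Ks: "Rm.subspace K" using Kgr by (simp add: gr_submodule_def)
  have "\<not> K \<subseteq> P"
  proof
    assume KP: "K \<subseteq> P"
    have "ideal_times scale K \<subseteq> PM" unfolding PM_def ideal_times_def
      by (rule span_mono) (use KP in blast)
    moreover have "m \<in> span {m}" by (rule span_base) simp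
    ultimately show False using Km mPM by blast
  qed
  then obtain k where kK: "k \<in> K" and kP: "k \<notin> P" by blast
  define Q where "Q = Rm.span (insert k P)"
  have "Q = P \<or> 1 \<in> Q"
    using Pmax[of Q] Rm.subspace_span[of "insert k P"] Rm.span_superset[of "insert k P"]
    unfolding Q_def by blast
  moreover have "k \<in> Q" unfolding Q_def by (rule Rm.span_base) simp
  ultimately have "1 \<in> Q" using kP by blast
  then obtain c where "1 - c * k \<in> Rm.span P" unfolding Q_def Rm.span_breakdown_eq by blast
  moreover have "Rm.span P = P" using Ps by (simp only: Rm.span_eq_iff)
  ultimately have pP: "1 - c * k \<in> P" by simp
  define u where "u = c * k"
  define p where "p = 1 - u"
  have pP': "p \<in> P" using pP unfolding p_def u_def .
  have uK: "u \<in> K" unfolding u_def by (rule Rm.subspace_scale[OF Ks kK])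
  have uM: "\<exists>\<gamma>. scale u m' = scale \<gamma> m" for m'
  proof -
    have "scale u m' \<in> ideal_times scale K" unfolding ideal_times_def
      by (rule span_base) (use uK in blast)
    hence "scale u m' \<in> span {m}" using Km by simp
    thus ?thesis unfolding span_singleton by blast
  qed
  define V where "V = {y. \<exists>b\<in>B. scale u y = scale b m}"
  have Vs: "subspace V"
  proof (rule subspaceI)
    show "0 \<in> V" unfolding V_def using Rm.subspace_0[OF B] by force
  next
    fix y z assume "y \<in> V" "z \<in> V"
    then obtain b b' where b: "b \<in> B" "scale u y = scale b m" and b': "b' \<in> B" "scale u z = scale b' m"
      unfolding V_def by blast
    have "scale u (y + z) = scale (b + b') m" using b b' by (simp add: scale_right_distrib scale_left_distrib)
    thus "y + z \<in> V" unfolding V_def using Rm.subspace_add[OF B b(1) b'(1)] by blast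
  next
    fix c y assume "y \<in> V"
    then obtain b where b: "b \<in> B" "scale u y = scale b m" unfolding V_def by blast
    have "scale u (scale c y) = scale c (scale u y)" by (rule scale_left_commute)
    also have "\<dots> = scale (c * b) m" using b by simp
    finally show "scale c y \<in> V" unfolding V_def using Rm.subspace_scale[OF B b(1)] by blast
  qed
  have BV: "ideal_times scale B \<subseteq> V" unfolding ideal_times_def
  proof (rule span_minimal[OF _ Vs], rule subsetI)
    fix y assume "y \<in> {scale k m |k m. k \<in> B}"
    then obtain b m' where y: "y = scale b m'" and b: "b \<in> B" by blast
    obtain \<gamma> where g: "scale u m' = scale \<gamma> m" using uM by blast
    have "scale u y = scale b (scale u m')" unfolding y by (rule scale_left_commute)
    also have "\<dots> = scale (\<gamma> * b) m" using g by (simp add: mult.commute)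
    finally show "y \<in> V" unfolding V_def using Rm.subspace_scale[OF B b] by blast
  qed
  obtain b where bB: "b \<in> B" and ub: "scale u (scale x m) = scale b m"
    using BV xB[of m] unfolding V_def by blast
  have z: "scale (u * x - b) m = 0" using ub by (simp add: scale_left_diff_distrib)
  have "\<forall>m'. scale ((u * x - b) * u) m' = 0"
  proof
    fix m'
    obtain \<gamma> where g: "scale u m' = scale \<gamma> m" using uM by blast
    have "scale ((u * x - b) * u) m' = scale (u * x - b) (scale u m')" by simp
    also have "\<dots> = scale \<gamma> (scale (u * x - b) m)" unfolding g by (rule scale_left_commute)
    also have "\<dots> = 0" using z by simp
    finally show "scale ((u * x - b) * u) m' = 0" .
  qed
  hence "(u * x - b) * u = 0" using fa unfolding faithful_def by blast
  hence eq: "(u * u) * x = u * b" by (simp add: algebra_simps)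
  have "u * b \<in> B" by (rule Rm.subspace_scale[OF B bB])
  hence "u * u \<in> C" unfolding C_def using eq by simp
  hence uuP: "u * u \<in> P" using CP by blast
  have "(2 - p) * p \<in> P" by (rule Rm.subspace_scale[OF Ps pP'])
  hence "p * (2 - p) \<in> P" by (simp only: mult.commute)
  hence "u * u + p * (2 - p) \<in> P" by (rule Rm.subspace_add[OF Ps uuP])
  moreover have "u * u + p * (2 - p) = 1" unfolding p_def by (simp add: algebra_simps)
  ultimately show False using P1 by simp
qed

end

context gm begin
lemma in_single:
  assumes "span {m} = ideal_times scale K" "k \<in> K"
  shows "\<exists>\<gamma>. scale k m' = scale \<gamma> m"
proof -
  have "scale k m' \<in> ideal_times scale K" unfolding ideal_times_def
    by (rule span_base) (use assms(2) in blast)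
  hence "scale k m' \<in> span {m}" using assms(1) by simp
  thus ?thesis unfolding span_singleton by blast
qed
end

lemma pow_aux: "0 < n \<Longrightarrow> ((a::'a::comm_ring_1) * b) ^ n = (a ^ n * b) * b ^ (n - 1)"
  by (cases n) (simp_all add: power_mult_distrib mult_ac)

theorem theorem2p20:
  fixes scale :: "'r::comm_ring_1 \<Rightarrow> 'm::ab_group_add \<Rightarrow> 'm"
    and Rg :: "'g::group_add \<Rightarrow> 'r set"
    and Mg :: "'g \<Rightarrow> 'm set"
    and U :: "'m set"
  assumes "graded_module scale Rg Mg"
    and "gr_fin_gen scale Mg"
    and "faithful scale"
    and "gr_multiplication scale Rg Mg"
    and "gr_submodule scale Mg U" and "U \<noteq> UNIV"
    and "J_gr scale Mg = ideal_times scale (J_gr (*) Rg)"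
  shows "gr_weakly_J_semiprime scale Rg Mg U \<longleftrightarrow>
         gr_weakly_J_semiprime (*) Rg Rg (colon scale U)"
proof -
  interpret M: gm scale Rg Mg by (rule gm.intro) (rule assms(1))
  note fg = assms(2) and fa = assms(3) and mu = assms(4) and Ugr = assms(5) and UU = assms(6)
    and JJ = assms(7)
  define I where "I = colon scale U"
  define JR where "JR = J_gr (*) Rg"
  define JM where "JM = J_gr scale Mg"
  have Us: "M.subspace U" using Ugr by (simp add: gr_submodule_def)
  have Igr: "gr_submodule (*) Rg I" unfolding I_def by (rule M.colon_gr[OF Ugr])
  have Is: "Rm.subspace I" using Igr by (simp add: gr_submodule_def)
  have IU: "scale i m \<in> U" if "i \<in> I" for i m using that unfolding I_def colon_def by simp
  have I1: "I \<noteq> UNIV"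
  proof
    assume "I = UNIV"
    hence "scale 1 m \<in> U" for m using IU by blast
    hence "U = UNIV" by auto
    thus False using UU by simp
  qed
  have JRs: "Rm.subspace JR" unfolding JR_def by (rule J_sub[OF module_mult])
  have JMeq: "JM = ideal_times scale JR" unfolding JM_def JR_def by (rule JJ)
  have JMs: "M.subspace JM" unfolding JMeq ideal_times_def by simp
  have jJM: "scale j m \<in> JM" if "j \<in> JR" for j m
    unfolding JMeq ideal_times_def by (rule M.span_base) (use that in blast)
  have nilJ: "y \<in> JR" if "y \<in> Rg g" "y ^ n = 0" for y g n
    unfolding JR_def by (rule M.nil_J[OF that])
  define W where "W = {u + j | u j. u \<in> U \<and> j \<in> JM}"
  have Ws: "M.subspace W"
  proof (rule M.subspaceI)
    show "0 \<in> W" unfolding W_def using M.subspace_0[OF Us] M.subspace_0[OF JMs] by force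
  next
    fix x y assume "x \<in> W" "y \<in> W"
    then obtain u j u' j' where x: "x = u + j" "u \<in> U" "j \<in> JM" and y: "y = u' + j'" "u' \<in> U" "j' \<in> JM"
      unfolding W_def by blast
    have "x + y = (u + u') + (j + j')" unfolding x y by (simp add: algebra_simps)
    thus "x + y \<in> W" unfolding W_def using M.subspace_add[OF Us x(2) y(2)] M.subspace_add[OF JMs x(3) y(3)] by blast
  next
    fix c x assume "x \<in> W"
    then obtain u j where x: "x = u + j" "u \<in> U" "j \<in> JM" unfolding W_def by blast
    have "scale c x = scale c u + scale c j" unfolding x by (rule M.scale_right_distrib)
    thus "scale c x \<in> W" unfolding W_def using M.subspace_scale[OF Us x(2)] M.subspace_scale[OF JMs x(3)] by blast
  qed
  define Bs where "Bs = {u + j | u j. u \<in> I \<and> j \<in> JR}"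
  have Bss: "Rm.subspace Bs"
  proof (rule Rm.subspaceI)
    show "0 \<in> Bs" unfolding Bs_def using Rm.subspace_0[OF Is] Rm.subspace_0[OF JRs] by force
  next
    fix x y assume "x \<in> Bs" "y \<in> Bs"
    then obtain u j u' j' where x: "x = u + j" "u \<in> I" "j \<in> JR" and y: "y = u' + j'" "u' \<in> I" "j' \<in> JR"
      unfolding Bs_def by blast
    have "x + y = (u + u') + (j + j')" unfolding x y by (simp add: algebra_simps)
    thus "x + y \<in> Bs" unfolding Bs_def using Rm.subspace_add[OF Is x(2) y(2)] Rm.subspace_add[OF JRs x(3) y(3)] by blast
  next
    fix c x assume "x \<in> Bs"
    then obtain u j where x: "x = u + j" "u \<in> I" "j \<in> JR" unfolding Bs_def by blast
    have "c * x = c * u + c * j" unfolding x by (rule distrib_left)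
    thus "c * x \<in> Bs" unfolding Bs_def using Rm.subspace_scale[OF Is x(2)] Rm.subspace_scale[OF JRs x(3)] by blast
  qed
  show ?thesis
  proof
    assume Uw: "gr_weakly_J_semiprime scale Rg Mg U"
    have Uw': "scale r m \<in> W" if "r \<in> Rg g" "m \<in> Mg h" "0 < n" "scale (r ^ n) m \<noteq> 0" "scale (r ^ n) m \<in> U"
      for g h r m and n :: nat
      using Uw that unfolding gr_weakly_J_semiprime_def W_def JM_def by blast
    define BM where "BM = ideal_times scale Bs"
    have BMs: "M.subspace BM" unfolding BM_def ideal_times_def by simp
    have UBM: "U \<subseteq> BM"
    proof -
      obtain K where Kgr: "gr_submodule (*) Rg K" and UK: "U = ideal_times scale K"
        using mu Ugr unfolding gr_multiplication_def by blast
      have KB: "K \<subseteq> Bs"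
      proof
        fix k assume k: "k \<in> K"
        have "scale k m \<in> U" for m unfolding UK ideal_times_def
          by (rule M.span_base) (use k in blast)
        hence "k \<in> I" unfolding I_def colon_def by simp
        moreover have "k = k + 0" by simp
        ultimately show "k \<in> Bs" unfolding Bs_def using Rm.subspace_0[OF JRs] by blast
      qed
      show ?thesis unfolding UK BM_def ideal_times_def
        by (rule M.span_mono) (use KB in blast)
    qed
    have JBM: "JM \<subseteq> BM" unfolding JMeq BM_def ideal_times_def
    proof (rule M.span_mono, rule subsetI)
      fix y assume "y \<in> {scale k m |k m. k \<in> JR}"
      then obtain k m where "y = scale k m" "k \<in> JR" by blast
      moreover have "k = 0 + k" by simp
      ultimately show "y \<in> {scale k m |k m. k \<in> Bs}" unfolding Bs_def using Rm.subspace_0[OF Is] by blast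
    qed
    have WBM: "W \<subseteq> BM"
    proof
      fix y assume "y \<in> W"
      then obtain u j where "y = u + j" "u \<in> U" "j \<in> JM" unfolding W_def by blast
      thus "y \<in> BM" using M.subspace_add[OF BMs] UBM JBM by blast
    qed
    show "gr_weakly_J_semiprime (*) Rg Rg (colon scale U)"
      unfolding gr_weakly_J_semiprime_def I_def[symmetric] JR_def[symmetric] Bs_def[symmetric]
    proof (intro conjI allI impI)
      show "gr_submodule (*) Rg I" by (rule Igr)
      show "I \<noteq> UNIV" by (rule I1)
      fix g h r s and n :: nat
      assume r: "r \<in> Rg g" and s: "s \<in> Rg h" and n: "0 < n" and nz: "r ^ n * s \<noteq> 0" and inI: "r ^ n * s \<in> I"
      define V where "V = {m. scale (r * s) m \<in> BM}"
      have Vs: "M.subspace V" unfolding V_def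
      proof (rule M.subspaceI)
        show "0 \<in> {m. scale (r * s) m \<in> BM}" using M.subspace_0[OF BMs] by simp
      next
        fix x y assume "x \<in> {m. scale (r * s) m \<in> BM}" "y \<in> {m. scale (r * s) m \<in> BM}"
        thus "x + y \<in> {m. scale (r * s) m \<in> BM}" using M.subspace_add[OF BMs] by (simp add: M.scale_right_distrib)
      next
        fix c x assume "x \<in> {m. scale (r * s) m \<in> BM}"
        hence "scale (r * s) x \<in> BM" by simp
        hence "scale c (scale (r * s) x) \<in> BM" by (rule M.subspace_scale[OF BMs])
        moreover have "scale (r * s) (scale c x) = scale c (scale (r * s) x)" by (rule M.scale_left_commute)
        ultimately show "scale c x \<in> {m. scale (r * s) m \<in> BM}" unfolding mem_Collect_eq by (simp only:)
      qed
      obtain S where fS: "finite S" and Sh: "S \<subseteq> homog Mg" and sp: "M.span S = UNIV"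
        using fg unfolding gr_fin_gen_def by blast
      have SV: "S \<subseteq> V"
      proof
        fix m assume mS: "m \<in> S"
        obtain h' where mh: "m \<in> Mg h'" using mS Sh unfolding homog_def by blast
        show "m \<in> V"
        proof (cases "scale (r ^ n) (scale s m) = 0")
          case False
          have "scale (r ^ n) (scale s m) = scale (r ^ n * s) m" by simp
          also have "\<dots> \<in> U" by (rule IU[OF inI])
          finally have "scale r (scale s m) \<in> W"
            by (intro Uw'[OF r M.scM[OF s mh] n False])
          hence "scale (r * s) m \<in> BM" using WBM by auto
          thus ?thesis unfolding V_def by simp
        next
          case True
          hence z: "scale (r ^ n * s) m = 0" by simp
          obtain K where Kgr: "gr_submodule (*) Rg K" and Km: "M.span {m} = ideal_times scale K"
            using M.single_mult[OF mu mh] by blast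
          have "ideal_times scale K \<subseteq> V"
          proof (rule M.KM_sub[OF Kgr Vs])
            fix k g' m' assume kK: "k \<in> K" and kg: "k \<in> Rg g'"
            have "\<forall>m''. scale (r ^ n * s * k) m'' = 0"
            proof
              fix m''
              obtain \<gamma> where ga: "scale k m'' = scale \<gamma> m" using M.in_single[OF Km kK] by blast
              have "scale (r ^ n * s * k) m'' = scale (r ^ n * s) (scale k m'')" by simp
              also have "\<dots> = scale \<gamma> (scale (r ^ n * s) m)" unfolding ga by (rule M.scale_left_commute)
              also have "\<dots> = 0" using z by simp
              finally show "scale (r ^ n * s * k) m'' = 0" .
            qed
            hence z2: "r ^ n * s * k = 0" using fa unfolding faithful_def by blast
            have "(r * (s * k)) ^ n = (r ^ n * (s * k)) * (s * k) ^ (n - 1)" by (rule pow_aux[OF n])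
            also have "\<dots> = 0" using z2 by (simp add: mult.assoc)
            finally have pz: "(r * (s * k)) ^ n = 0" .
            have "r * (s * k) \<in> Rg (g + (h + g'))" by (rule M.mulR[OF r M.mulR[OF s kg]])
            hence "r * (s * k) \<in> JR" using nilJ pz by blast
            hence "scale (r * (s * k)) m' \<in> JM" by (rule jJM)
            hence "scale (r * (s * k)) m' \<in> BM" using JBM by blast
            thus "scale k m' \<in> V" unfolding V_def by (simp add: mult.assoc)
          qed
          moreover have "m \<in> M.span {m}" by (rule M.span_base) simp
          ultimately show ?thesis using Km by blast
        qed
      qed
      have "M.span S \<subseteq> V" by (rule M.span_minimal[OF SV Vs])
      hence allV: "\<And>m. scale (r * s) m \<in> BM" using sp unfolding V_def by blast
      show "r * s \<in> Bs" by (rule M.cancel[OF fg fa mu Bss allV[unfolded BM_def]])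
    qed
  next
    assume Iw: "gr_weakly_J_semiprime (*) Rg Rg (colon scale U)"
    have Iw': "r * s \<in> Bs" if "r \<in> Rg g" "s \<in> Rg h" "0 < n" "r ^ n * s \<noteq> 0" "r ^ n * s \<in> I"
      for g h r s and n :: nat
      using Iw that unfolding gr_weakly_J_semiprime_def Bs_def I_def JR_def by blast
    show "gr_weakly_J_semiprime scale Rg Mg U"
      unfolding gr_weakly_J_semiprime_def JM_def[symmetric] W_def[symmetric]
    proof (intro conjI allI impI)
      show "gr_submodule scale Mg U" by (rule Ugr)
      show "U \<noteq> UNIV" by (rule UU)
      fix g h r m and n :: nat
      assume r: "r \<in> Rg g" and mh: "m \<in> Mg h" and n: "0 < n" and nz: "scale (r ^ n) m \<noteq> 0"
        and inU: "scale (r ^ n) m \<in> U"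
      define V where "V = {y. scale r y \<in> W}"
      have Vs: "M.subspace V" unfolding V_def
      proof (rule M.subspaceI)
        show "0 \<in> {y. scale r y \<in> W}" using M.subspace_0[OF Ws] by simp
      next
        fix x y assume "x \<in> {y. scale r y \<in> W}" "y \<in> {y. scale r y \<in> W}"
        thus "x + y \<in> {y. scale r y \<in> W}" using M.subspace_add[OF Ws] by (simp add: M.scale_right_distrib)
      next
        fix c x assume "x \<in> {y. scale r y \<in> W}"
        hence "scale r x \<in> W" by simp
        hence "scale c (scale r x) \<in> W" by (rule M.subspace_scale[OF Ws])
        moreover have "scale r (scale c x) = scale c (scale r x)" by (rule M.scale_left_commute)
        ultimately show "scale c x \<in> {y. scale r y \<in> W}" unfolding mem_Collect_eq by (simp only:)
      qed
      obtain K where Kgr: "gr_submodule (*) Rg K" and Km: "M.span {m} = ideal_times scale K"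
        using M.single_mult[OF mu mh] by blast
      have "ideal_times scale K \<subseteq> V"
      proof (rule M.KM_sub[OF Kgr Vs])
        fix k g' m' assume kK: "k \<in> K" and kg: "k \<in> Rg g'"
        show "scale k m' \<in> V"
        proof (cases "r ^ n * k = 0")
          case False
          have "r ^ n * k \<in> I" unfolding I_def colon_def
          proof (rule CollectI, rule allI)
            fix m''
            obtain \<gamma> where ga: "scale k m'' = scale \<gamma> m" using M.in_single[OF Km kK] by blast
            have "scale (r ^ n * k) m'' = scale (r ^ n) (scale k m'')" by simp
            also have "\<dots> = scale \<gamma> (scale (r ^ n) m)" unfolding ga by (rule M.scale_left_commute)
            also have "\<dots> \<in> U" by (rule M.subspace_scale[OF Us inU])
            finally show "scale (r ^ n * k) m'' \<in> U" .
          qed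
          hence "r * k \<in> Bs" using Iw'[OF r kg n False] by blast
          then obtain i j where rk: "r * k = i + j" "i \<in> I" "j \<in> JR" unfolding Bs_def by blast
          have "scale r (scale k m') = scale i m' + scale j m'"
            using rk(1) by (simp add: M.scale_left_distrib[symmetric])
          moreover have "scale i m' + scale j m' \<in> W" unfolding W_def
            using IU[OF rk(2)] jJM[OF rk(3)] by blast
          ultimately show ?thesis unfolding V_def by simp
        next
          case True
          have "(r * k) ^ n = (r ^ n * k) * k ^ (n - 1)" by (rule pow_aux[OF n])
          also have "\<dots> = 0" using True by simp
          finally have pz: "(r * k) ^ n = 0" .
          have "r * k \<in> Rg (g + g')" by (rule M.mulR[OF r kg])
          hence "r * k \<in> JR" using nilJ pz by blast
          hence "scale (r * k) m' \<in> JM" by (rule jJM)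
          hence "0 + scale (r * k) m' \<in> W" unfolding W_def using M.subspace_0[OF Us] by blast
          thus ?thesis unfolding V_def by simp
        qed
      qed
      moreover have "m \<in> M.span {m}" by (rule M.span_base) simp
      ultimately have "m \<in> V" using Km by blast
      thus "scale r m \<in> W" unfolding V_def by simp
    qed
  qed
qed

end
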